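(* Let $X_1,X_2,\ldots$ be i.i.d. with mean $0$ and variance $1$, $Z_1,Z_2,\ldots$ i.i.d. $N(0,1)$ independent of the $X$'s, and $G_n\in\mathscr G_n$ with $|E(G_n)|\to\infty$. Fix $M$ with $b_M>0$ and fix $K_1,K_2\ge1$. Then for every $\varepsilon>0$, $$\lim_{n\to\infty}\Pr(|U_{11,n,M}+U_{12,n,M}|>\varepsilon)=0.$$
   Context: $\mathscr G_n$: simple undirected graphs on $\{1,\ldots,n\}$ labeled so that degrees satisfy $d_1\ge\cdots\ge d_n$; $A(G_n)=((a_{u,v}))$ adjacency matrix, $E(G_n)$ edge set. Truncation: $a_M=\mathbb E[X_1\mathbf 1\{|X_1|\le M\}]$, $b_M=\operatorname{Var}[X_1\mathbf 1\{|X_1|\le M\}]$, $X_{u,M}:=b_M^{-1/2}(X_u\mathbf 1\{|X_u|\le M\}-a_M)$. Vertex partition: $V_1=\{1,\ldots,\lfloor K_1\rfloor\}$, $V_2=\{\lfloor K_1\rfloor+1,\ldots,\lfloor K_2\sqrt{|E(G_n)|}\rfloor\}$, $V_3=\{\lfloor K_2\sqrt{|E(G_n)|}\rfloor+1,\ldots,n\}$. $A_{st}$ is the submatrix of $A(G_n)$ with rows indexed by $V_s$ and columns by $V_t$. $\bm X^{(1)}_{n,M}=(X_{u,M})_{u\in V_1}$, $\bm Z^{(2)}_n=(Z_u)_{u\in V_2}$. $U_{11,n,M}:=\frac{(\bm X^{(1)}_{n,M})^\top A_{11}\bm X^{(1)}_{n,M}}{2\sqrt{|E(G_n)|}}$ and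 $U_{12,n,M}:=\frac{(\bm X^{(1)}_{n,M})^\top A_{12}\bm Z^{(2)}_n}{\sqrt{|E(G_n)|}}$. *)

theory Defs
  imports "HOL-Probability.Probability"
begin

definition simple_graph_on :: "nat \<Rightarrow> (nat \<Rightarrow> nat \<Rightarrow> bool) \<Rightarrow> bool" where
  "simple_graph_on n E \<longleftrightarrow>
     (\<forall>u v. E u v \<longrightarrow> u \<in> {1..n} \<and> v \<in> {1..n} \<and> u \<noteq> v \<and> E v u)"

definition degree :: "nat \<Rightarrow> (nat \<Rightarrow> nat \<Rightarrow> bool) \<Rightarrow> nat \<Rightarrow> nat" where
  "degree n E u = card {v \<in> {1..n}. E u v}"

definition graph_class :: "nat \<Rightarrow> (nat \<Rightarrow> nat \<Rightarrow> bool) \<Rightarrow> bool" where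
  "graph_class n E \<longleftrightarrow> simple_graph_on n E \<and>
     (\<forall>u v. 1 \<le> u \<longrightarrow> u \<le> v \<longrightarrow> v \<le> n \<longrightarrow> degree n E v \<le> degree n E u)"

definition num_edges :: "nat \<Rightarrow> (nat \<Rightarrow> nat \<Rightarrow> bool) \<Rightarrow> nat" where
  "num_edges n E = card {(u, v). u \<in> {1..n} \<and> v \<in> {1..n} \<and> u < v \<and> E u v}"

definition adj :: "(nat \<Rightarrow> nat \<Rightarrow> bool) \<Rightarrow> nat \<Rightarrow> nat \<Rightarrow> real" where
  "adj E u v = (if E u v then 1 else 0)"

text \<open>Vertex blocks V_1 and V_2 (m = number of edges).\<close>
definition V1 :: "real \<Rightarrow> nat set" where
  "V1 K1 = {1..nat \<lfloor>K1\<rfloor>}"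

definition V2 :: "real \<Rightarrow> real \<Rightarrow> nat \<Rightarrow> nat set" where
  "V2 K1 K2 m = {nat \<lfloor>K1\<rfloor> + 1 .. nat \<lfloor>K2 * sqrt (real m)\<rfloor>}"

definition trunc :: "real \<Rightarrow> real \<Rightarrow> real" where
  "trunc M x = (if \<bar>x\<bar> \<le> M then x else 0)"

definition a_M :: "'a measure \<Rightarrow> (nat \<Rightarrow> 'a \<Rightarrow> real) \<Rightarrow> real \<Rightarrow> real" where
  "a_M P X M = prob_space.expectation P (\<lambda>\<omega>. trunc M (X 1 \<omega>))"

definition b_M :: "'a measure \<Rightarrow> (nat \<Rightarrow> 'a \<Rightarrow> real) \<Rightarrow> real \<Rightarrow> real" where
  "b_M P X M = prob_space.variance P (\<lambda>\<omega>. trunc M (X 1 \<omega>))"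

definition X_trunc :: "'a measure \<Rightarrow> (nat \<Rightarrow> 'a \<Rightarrow> real) \<Rightarrow> real \<Rightarrow> nat \<Rightarrow> 'a \<Rightarrow> real" where
  "X_trunc P X M u \<omega> = (trunc M (X u \<omega>) - a_M P X M) / sqrt (b_M P X M)"

definition U11 :: "'a measure \<Rightarrow> (nat \<Rightarrow> 'a \<Rightarrow> real) \<Rightarrow> real \<Rightarrow> real \<Rightarrow>
    nat \<Rightarrow> (nat \<Rightarrow> nat \<Rightarrow> bool) \<Rightarrow> 'a \<Rightarrow> real" where
  "U11 P X M K1 n E \<omega> =
     (\<Sum>u\<in>V1 K1. \<Sum>v\<in>V1 K1. X_trunc P X M u \<omega> * adj E u v * X_trunc P X M v \<omega>)
       / (2 * sqrt (real (num_edges n E)))"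

definition U12 :: "'a measure \<Rightarrow> (nat \<Rightarrow> 'a \<Rightarrow> real) \<Rightarrow> (nat \<Rightarrow> 'a \<Rightarrow> real) \<Rightarrow> real \<Rightarrow>
    real \<Rightarrow> real \<Rightarrow> nat \<Rightarrow> (nat \<Rightarrow> nat \<Rightarrow> bool) \<Rightarrow> 'a \<Rightarrow> real" where
  "U12 P X Z M K1 K2 n E \<omega> =
     (\<Sum>u\<in>V1 K1. \<Sum>v\<in>V2 K1 K2 (num_edges n E). X_trunc P X M u \<omega> * adj E u v * Z v \<omega>)
       / sqrt (real (num_edges n E))"

end

theory Submission
  imports Defs
begin

lemma (in prob_space) std_normal_facts:
  assumes D: "distributed M lborel Z std_normal_density"
  shows "Z \<in> borel_measurable M" "integrable M Z" "integrable M (\<lambda>x. (Z x)\<^sup>2)"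
    "expectation Z = 0" "expectation (\<lambda>x. (Z x)\<^sup>2) = 1"
proof -
  show m: "Z \<in> borel_measurable M"
    using distributed_measurable[OF D] by simp
  show i1: "integrable M Z"
    using distributed_integrable[OF D, of "\<lambda>x. x"] integrable_std_normal_moment[of 1] by simp
  show i2: "integrable M (\<lambda>x. (Z x)\<^sup>2)"
    using distributed_integrable[OF D, of "\<lambda>x. x^2"] integrable_std_normal_moment[of 2] by simp
  show e: "expectation Z = 0" using standard_normal_distributed_expectation[OF D] .
  show "expectation (\<lambda>x. (Z x)\<^sup>2) = 1"
    using standard_normal_distributed_variance[OF D] variance_eq[OF i1 i2] e by simp
qed

lemma (in prob_space) indep_pair_zero:
  fixes F :: "'b + nat \<Rightarrow> 'a \<Rightarrow> real"
  assumes ind: "indep_vars (\<lambda>_. borel) F UNIV"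
    and Zn: "\<And>v. distributed M lborel (F (Inr v)) std_normal_density"
    and vw: "v \<noteq> w"
  shows "integrable M (\<lambda>x. F (Inr v) x * F (Inr w) x)"
    "expectation (\<lambda>x. F (Inr v) x * F (Inr w) x) = 0"
proof -
  have I: "indep_vars (\<lambda>_. borel) F {Inr v, Inr w}"
    by (rule indep_vars_subset[OF ind]) auto
  have int: "\<And>i. i \<in> {Inr v, Inr w} \<Longrightarrow> integrable M (F i)"
    using std_normal_facts(2)[OF Zn] by auto
  have p: "\<And>x. (\<Prod>i\<in>{Inr v, Inr w}. F i x) = F (Inr v) x * F (Inr w) x"
    using vw by simp
  show "integrable M (\<lambda>x. F (Inr v) x * F (Inr w) x)"
    using indep_vars_integrable[OF _ I int] p by simp
  have "expectation (\<lambda>x. F (Inr v) x * F (Inr w) x) = (\<Prod>i\<in>{Inr v, Inr w}. expectation (F i))"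
    using indep_vars_lebesgue_integral[OF _ I int] p by simp
  also have "\<dots> = 0" using std_normal_facts(4)[OF Zn] vw by simp
  finally show "expectation (\<lambda>x. F (Inr v) x * F (Inr w) x) = 0" .
qed

lemma (in prob_space) second_moment_sum:
  fixes F :: "'b + nat \<Rightarrow> 'a \<Rightarrow> real"
  assumes ind: "indep_vars (\<lambda>_. borel) F UNIV"
    and Zn: "\<And>v. distributed M lborel (F (Inr v)) std_normal_density"
    and T: "finite T"
  shows "integrable M (\<lambda>x. (\<Sum>v\<in>T. c v * F (Inr v) x)\<^sup>2)"
    "expectation (\<lambda>x. (\<Sum>v\<in>T. c v * F (Inr v) x)\<^sup>2) = (\<Sum>v\<in>T. (c v)\<^sup>2)"
proof -
  have eq: "\<And>x. (\<Sum>v\<in>T. c v * F (Inr v) x)\<^sup>2 = (\<Sum>v\<in>T. \<Sum>w\<in>T. c v * c w * (F (Inr v) x * F (Inr w) x))"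
    by (simp add: power2_eq_square sum_product algebra_simps)
  have ii: "integrable M (\<lambda>x. F (Inr v) x * F (Inr w) x)" for v w
  proof (cases "v = w")
    case True then show ?thesis using std_normal_facts(3)[OF Zn[of v]] by (simp add: power2_eq_square)
  next
    case False then show ?thesis using indep_pair_zero(1)[OF ind Zn] by blast
  qed
  have ee: "expectation (\<lambda>x. F (Inr v) x * F (Inr w) x) = (if v = w then 1 else 0)" for v w
  proof (cases "v = w")
    case True then show ?thesis using std_normal_facts(5)[OF Zn[of v]] by (simp add: power2_eq_square)
  next
    case False then show ?thesis using indep_pair_zero(2)[OF ind Zn] by simp
  qed
  show "integrable M (\<lambda>x. (\<Sum>v\<in>T. c v * F (Inr v) x)\<^sup>2)"
    unfolding eq by (simp add: ii)
  have "expectation (\<lambda>x. (\<Sum>v\<in>T. c v * F (Inr v) x)\<^sup>2)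
     = (\<Sum>v\<in>T. \<Sum>w\<in>T. c v * c w * expectation (\<lambda>x. F (Inr v) x * F (Inr w) x))"
    unfolding eq using ii by (simp add: integral_sum integrable_sum)
  also have "\<dots> = (\<Sum>v\<in>T. (c v)\<^sup>2)"
    unfolding ee using T by (simp add: power2_eq_square if_distrib sum.delta cong: if_cong)
  finally show "expectation (\<lambda>x. (\<Sum>v\<in>T. c v * F (Inr v) x)\<^sup>2) = (\<Sum>v\<in>T. (c v)\<^sup>2)" .
qed

lemma trunc_abs: "\<bar>trunc M x\<bar> \<le> \<bar>M\<bar>"
  unfolding trunc_def by auto

lemma adj_abs: "\<bar>adj E u v\<bar> \<le> 1" and adj_sq: "(adj E u v)\<^sup>2 \<le> 1"
  unfolding adj_def by auto

lemma card_V2: "real (card (V2 K1 K2 mm)) \<le> K2 * sqrt (real mm)" if "K2 \<ge> 0"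
proof -
  have "card (V2 K1 K2 mm) \<le> nat \<lfloor>K2 * sqrt (real mm)\<rfloor>"
    unfolding V2_def by simp
  then have "real (card (V2 K1 K2 mm)) \<le> real (nat \<lfloor>K2 * sqrt (real mm)\<rfloor>)" by linarith
  also have "\<dots> \<le> K2 * sqrt (real mm)"
    using that by (simp add: of_nat_nat)
  finally show ?thesis .
qed

theorem lemma3p3:
  fixes P :: "'a measure" and X Z :: "nat \<Rightarrow> 'a \<Rightarrow> real"
    and G :: "nat \<Rightarrow> nat \<Rightarrow> nat \<Rightarrow> bool"
    and M K1 K2 \<epsilon> :: real
  assumes "prob_space P"
    and indep: "prob_space.indep_vars P (\<lambda>_. borel)
                  (\<lambda>i. case i of Inl u \<Rightarrow> X u | Inr v \<Rightarrow> Z v) (UNIV :: (nat + nat) set)"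
    and X_id: "\<And>u. distr P borel (X u) = distr P borel (X 1)"
    and X_int: "integrable P (X 1)" and X_mean: "prob_space.expectation P (X 1) = 0"
    and X_sq_int: "integrable P (\<lambda>\<omega>. (X 1 \<omega>)\<^sup>2)"
    and X_var: "prob_space.variance P (X 1) = 1"
    and Z_normal: "\<And>v. distributed P lborel (Z v) std_normal_density"
    and G_class: "\<And>n. graph_class n (G n)"
    and G_edges: "filterlim (\<lambda>n. real (num_edges n (G n))) at_top sequentially"
    and bM: "b_M P X M > 0"
    and K1: "K1 \<ge> 1" and K2: "K2 \<ge> 1"
    and eps: "\<epsilon> > 0"
  shows "(\<lambda>n. prob_space.prob P {\<omega> \<in> space P.
            \<bar>U11 P X M K1 n (G n) \<omega> + U12 P X Z M K1 K2 n (G n) \<omega>\<bar> > \<epsilon>})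
         \<longlonglongrightarrow> 0"
proof -
  interpret prob_space P by fact
  define F where "F = (\<lambda>i. case i of Inl u \<Rightarrow> X u | Inr v \<Rightarrow> Z v)"
  have indF: "indep_vars (\<lambda>_. borel) F UNIV" using indep unfolding F_def .
  have ZF: "\<And>v. F (Inr v) = Z v" by (simp add: F_def)
  have Zn': "\<And>v. distributed P lborel (F (Inr v)) std_normal_density"
    using Z_normal by (simp add: ZF)
  have Zm[measurable]: "\<And>v. Z v \<in> borel_measurable P"
    using std_normal_facts(1)[OF Z_normal] .
  define m where "m n = num_edges n (G n)" for n
  define S where "S = V1 K1"
  have finS: "finite S" by (simp add: S_def V1_def)
  have cardS: "card S = nat \<lfloor>K1\<rfloor>" by (simp add: S_def V1_def)
  have fl: "\<lfloor>K1\<rfloor> \<ge> 1" using K1 by (simp add: le_floor_iff)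
  have cardS1: "real (card S) \<ge> 1" using fl cardS by simp
  have Sne: "S \<noteq> {}" using cardS1 by auto
  define C where "C = (\<bar>M\<bar> + \<bar>a_M P X M\<bar>) / sqrt (b_M P X M) + 1"
  have Cpos: "C > 0" proof -
    have "0 \<le> (\<bar>M\<bar> + \<bar>a_M P X M\<bar>) / sqrt (b_M P X M)" using bM by simp
    then show ?thesis unfolding C_def by linarith
  qed
  have Xb: "\<bar>X_trunc P X M u \<omega>\<bar> \<le> C" for u \<omega>
  proof -
    have "\<bar>trunc M (X u \<omega>) - a_M P X M\<bar> \<le> \<bar>M\<bar> + \<bar>a_M P X M\<bar>"
      using trunc_abs[of M "X u \<omega>"] by linarith
    then have "\<bar>X_trunc P X M u \<omega>\<bar> \<le> (\<bar>M\<bar> + \<bar>a_M P X M\<bar>) / sqrt (b_M P X M)"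
      unfolding X_trunc_def using bM by (simp add: abs_div divide_right_mono)
    then show ?thesis unfolding C_def by linarith
  qed
  define W where "W n u \<omega> = (\<Sum>v\<in>V2 K1 K2 (m n). adj (G n) u v * Z v \<omega>)" for n u \<omega>
  define c0 where "c0 = (real (card S))\<^sup>2 * C\<^sup>2 / 2"
  have U11b: "\<bar>U11 P X M K1 n (G n) \<omega>\<bar> \<le> c0 / sqrt (m n)" for n \<omega>
  proof -
    have "\<bar>\<Sum>u\<in>S. \<Sum>v\<in>S. X_trunc P X M u \<omega> * adj (G n) u v * X_trunc P X M v \<omega>\<bar>
        \<le> (\<Sum>u\<in>S. \<Sum>v\<in>S. \<bar>X_trunc P X M u \<omega> * adj (G n) u v * X_trunc P X M v \<omega>\<bar>)"
      by (rule order.trans[OF sum_abs sum_mono]) (rule sum_abs)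
    also have "\<dots> \<le> (\<Sum>u\<in>S. \<Sum>v\<in>S. C * C)"
    proof (intro sum_mono)
      fix u v
      have "\<bar>X_trunc P X M u \<omega> * adj (G n) u v * X_trunc P X M v \<omega>\<bar>
          = \<bar>X_trunc P X M u \<omega>\<bar> * \<bar>adj (G n) u v\<bar> * \<bar>X_trunc P X M v \<omega>\<bar>"
        by (simp add: abs_mult)
      also have "\<dots> \<le> C * 1 * C"
        by (intro mult_mono Xb adj_abs) (auto simp: less_imp_le[OF Cpos])
      finally show "\<bar>X_trunc P X M u \<omega> * adj (G n) u v * X_trunc P X M v \<omega>\<bar> \<le> C * C" by simp
    qed
    also have "\<dots> = (real (card S))\<^sup>2 * C\<^sup>2" by (simp add: power2_eq_square)
    finally have h: "\<bar>\<Sum>u\<in>S. \<Sum>v\<in>S. X_trunc P X M u \<omega> * adj (G n) u v * X_trunc P X M v \<omega>\<bar>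
        \<le> (real (card S))\<^sup>2 * C\<^sup>2" .
    show ?thesis
      unfolding U11_def c0_def m_def S_def[symmetric]
      using divide_right_mono[OF h, of "2 * sqrt (real (num_edges n (G n)))"]
      by (simp add: abs_div)
  qed
  have U12b: "\<bar>U12 P X Z M K1 K2 n (G n) \<omega>\<bar> \<le> C * (\<Sum>u\<in>S. \<bar>W n u \<omega>\<bar>) / sqrt (m n)" for n \<omega>
  proof -
    have eq: "U12 P X Z M K1 K2 n (G n) \<omega> = (\<Sum>u\<in>S. X_trunc P X M u \<omega> * W n u \<omega>) / sqrt (m n)"
      unfolding U12_def W_def S_def m_def by (simp add: sum_distrib_left mult.assoc)
    have "\<bar>\<Sum>u\<in>S. X_trunc P X M u \<omega> * W n u \<omega>\<bar> \<le> (\<Sum>u\<in>S. \<bar>X_trunc P X M u \<omega>\<bar> * \<bar>W n u \<omega>\<bar>)"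
      using sum_abs[of "\<lambda>u. X_trunc P X M u \<omega> * W n u \<omega>" S] by (simp add: abs_mult)
    also have "\<dots> \<le> (\<Sum>u\<in>S. C * \<bar>W n u \<omega>\<bar>)"
      by (intro sum_mono mult_right_mono Xb) auto
    finally have h: "\<bar>\<Sum>u\<in>S. X_trunc P X M u \<omega> * W n u \<omega>\<bar> \<le> C * (\<Sum>u\<in>S. \<bar>W n u \<omega>\<bar>)"
      by (simp add: sum_distrib_left)
    show ?thesis unfolding eq
      using divide_right_mono[OF h, of "sqrt (m n)"] by (simp add: abs_div)
  qed
  have sqrt_lim: "filterlim (\<lambda>n. sqrt (real (m n))) at_top sequentially"
    unfolding m_def by (rule filterlim_compose[OF sqrt_at_top G_edges])
  define \<delta> where "\<delta> = \<epsilon> / (2 * C * card S)"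
  have \<delta>pos: "\<delta> > 0" unfolding \<delta>_def using eps Cpos cardS1 by simp
  define B where "B n = (real (card S) * K2 / \<delta>\<^sup>2) * inverse (sqrt (real (m n)))" for n
  have ev: "eventually (\<lambda>n. max 1 (2 * c0 / \<epsilon>) \<le> sqrt (real (m n))) sequentially"
    using sqrt_lim unfolding filterlim_at_top by blast
  have bound: "eventually (\<lambda>n. prob {\<omega> \<in> space P.
            \<bar>U11 P X M K1 n (G n) \<omega> + U12 P X Z M K1 K2 n (G n) \<omega>\<bar> > \<epsilon>} \<le> B n) sequentially"
    using ev
  proof eventually_elim
    case (elim n)
    define s where "s = sqrt (real (m n))"
    have s1: "s \<ge> 1" using elim s_def by simp
    have sc: "c0 / s \<le> \<epsilon> / 2"
      using elim s1 eps unfolding s_def[symmetric] by (simp add: field_simps)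
    define A where "A u = {\<omega> \<in> space P. \<delta> * s \<le> \<bar>W n u \<omega>\<bar>}" for u
    have Ameas: "A u \<in> sets P" for u
      unfolding A_def W_def by measurable
    have sub: "{\<omega> \<in> space P. \<bar>U11 P X M K1 n (G n) \<omega> + U12 P X Z M K1 K2 n (G n) \<omega>\<bar> > \<epsilon>}
        \<subseteq> (\<Union>u\<in>S. A u)"
    proof
      fix \<omega> assume \<omega>: "\<omega> \<in> {\<omega> \<in> space P. \<bar>U11 P X M K1 n (G n) \<omega> + U12 P X Z M K1 K2 n (G n) \<omega>\<bar> > \<epsilon>}"
      show "\<omega> \<in> (\<Union>u\<in>S. A u)"
      proof (rule ccontr)
        assume "\<omega> \<notin> (\<Union>u\<in>S. A u)"
        then have lt: "\<And>u. u \<in> S \<Longrightarrow> \<bar>W n u \<omega>\<bar> < \<delta> * s" using \<omega> unfolding A_def by auto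
        have "(\<Sum>u\<in>S. \<bar>W n u \<omega>\<bar>) < (\<Sum>u\<in>S. \<delta> * s)"
          by (rule sum_strict_mono[OF finS Sne lt])
        then have h: "(\<Sum>u\<in>S. \<bar>W n u \<omega>\<bar>) < real (card S) * \<delta> * s" by simp
        have "C * (\<Sum>u\<in>S. \<bar>W n u \<omega>\<bar>) < C * (real (card S) * \<delta> * s)"
          using mult_strict_left_mono[OF h Cpos] .
        then have "C * (\<Sum>u\<in>S. \<bar>W n u \<omega>\<bar>) / s < C * (real (card S) * \<delta> * s) / s"
          using s1 by (intro divide_strict_right_mono) auto
        also have "\<dots> = \<epsilon> / 2" unfolding \<delta>_def using s1 Cpos cardS1 by (simp add: field_simps)
        finally have "\<bar>U12 P X Z M K1 K2 n (G n) \<omega>\<bar> < \<epsilon> / 2"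
          using U12b[of n \<omega>] unfolding s_def by linarith
        moreover have "\<bar>U11 P X M K1 n (G n) \<omega>\<bar> \<le> \<epsilon> / 2"
          using U11b[of n \<omega>] sc unfolding s_def by linarith
        ultimately show False using \<omega> by auto
      qed
    qed
    have Ab: "prob (A u) \<le> K2 / (\<delta>\<^sup>2 * s)" if "u \<in> S" for u
    proof -
      let ?T = "V2 K1 K2 (m n)"
      have Weq: "(\<lambda>\<omega>. (W n u \<omega>)\<^sup>2) = (\<lambda>\<omega>. (\<Sum>v\<in>?T. adj (G n) u v * F (Inr v) \<omega>)\<^sup>2)"
        unfolding W_def ZF ..
      have fin: "finite ?T" by (simp add: V2_def)
      have int2: "integrable P (\<lambda>\<omega>. (W n u \<omega>)\<^sup>2)"
        unfolding Weq by (rule second_moment_sum(1)[OF indF Zn' fin])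
      have E2: "expectation (\<lambda>\<omega>. (W n u \<omega>)\<^sup>2) = (\<Sum>v\<in>?T. (adj (G n) u v)\<^sup>2)"
        unfolding Weq by (rule second_moment_sum(2)[OF indF Zn' fin])
      also have "\<dots> \<le> real (card ?T)"
        using sum_bounded_above[of ?T "\<lambda>v. (adj (G n) u v)\<^sup>2" 1] adj_sq by simp
      also have "\<dots> \<le> K2 * s" unfolding s_def using card_V2 K2 by simp
      finally have E2b: "expectation (\<lambda>\<omega>. (W n u \<omega>)\<^sup>2) \<le> K2 * s" .
      have Wm: "W n u \<in> borel_measurable P" unfolding W_def by measurable
      have "prob (A u) \<le> expectation (\<lambda>\<omega>. (W n u \<omega>)\<^sup>2) / (\<delta> * s)\<^sup>2"
        unfolding A_def
        by (rule second_moment_method[OF Wm int2]) (use \<delta>pos s1 in simp)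
      also have "\<dots> \<le> K2 * s / (\<delta> * s)\<^sup>2"
        by (rule divide_right_mono[OF E2b]) simp
      also have "\<dots> = K2 / (\<delta>\<^sup>2 * s)"
        using s1 \<delta>pos by (simp add: field_simps power2_eq_square)
      finally show ?thesis .
    qed
    have "prob {\<omega> \<in> space P. \<bar>U11 P X M K1 n (G n) \<omega> + U12 P X Z M K1 K2 n (G n) \<omega>\<bar> > \<epsilon>}
        \<le> prob (\<Union>u\<in>S. A u)"
      by (rule finite_measure_mono[OF sub]) (use Ameas finS in auto)
    also have "\<dots> \<le> (\<Sum>u\<in>S. prob (A u))"
      by (rule finite_measure_subadditive_finite[OF finS]) (use Ameas in auto)
    also have "\<dots> \<le> (\<Sum>u\<in>S. K2 / (\<delta>\<^sup>2 * s))"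
      by (rule sum_mono[OF Ab])
    also have "\<dots> = B n"
      unfolding B_def s_def[symmetric] by (simp add: field_simps)
    finally show ?case .
  qed
  have Blim: "B \<longlonglongrightarrow> 0"
    unfolding B_def
    by (rule tendsto_mult_right_zero[OF tendsto_inverse_0_at_top[OF sqrt_lim]])
  show ?thesis
    by (rule tendsto_sandwich[OF _ bound tendsto_const Blim]) simp
qed

end
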